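(* Let $\mathcal T$ be a text, let $\alpha$ be right-maximal in $\mathcal T$, and let $\mathtt{st\text{-}lex}[b,e]$ be the range containing the text positions $i\in\mathtt{st\text{-}lex}$ such that $\mathcal T[1,i]$ is suffixed by $\alpha$. Let $C=\{c\in\Sigma: \alpha\cdot c\text{ occurs in }\mathcal T\}$. Then: (a) for $c\in C\setminus\{\min C\}$, if $\mathcal T[j-|\alpha|+1,n]$ is the lexicographically smallest suffix prefixed by $\alpha\cdot c=\mathcal T[j-|\alpha|+1,j+1]$, then $j\in\mathtt{st\text{-}lex}[b,e]$; (b) for $c\in C\setminus\{\max C\}$, if $\mathcal T[j-|\alpha|+1,n]$ is the lexicographically largest suffix prefixed by $\alpha\cdot c=\mathcal T[j-|\alpha|+1,j+1]$, then $j\in\mathtt{st\text{-}lex}[b,e]$.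
   Context: A text is a string $\mathcal T\in\Sigma^n$ over an integer alphabet whose last symbol $\mathcal T[n]=\$$ occurs only there and is smallest. A substring $\alpha$ is right-maximal if it is a suffix of $\mathcal T$ or there exist distinct $a,b$ with $\alpha a$, $\alpha b$ substrings of $\mathcal T$. $\mathrm{ISA}[i]$ is the lexicographic rank of suffix $\mathcal T[i,n]$. For $i\ne j$, $\mathrm{rlce}(i,j)$ is the length of the longest common prefix of $\mathcal T[i,n]$ and $\mathcal T[j,n]$. For a permutation $\pi$, $\mathrm{LPF}_\pi[i]=0$ if $\pi(i)=1$, else $\mathrm{LPF}_\pi[i]=\max_{\pi(j)<\pi(i)}\mathrm{rlce}(j,i)$, and $\mathrm{PDA}_\pi=\{i+\mathrm{LPF}_\pi[i]:i\in[n]\}$. Let $\mathtt{st\text{-}lex}^-=\mathrm{PDA}_\pi$ for $\pi(i)=\mathrm{ISA}[i]$ and $\mathtt{st\text{-}lex}^+=\mathrm{PDA}_{\bar\pi}$ for $\bar\pi(i)=n-\mathrm{ISA}[i]+1$. The array $\mathtt{st\text{-}lex}$ lists the set $\{i-1: i\in\mathtt{st\text{-}lex}^-\cup\mathtt{st\text{-}lex}^+\cup\{n+1\}\}$ sorted colexicographically by the prefixes $\mathcal T[1,j]$ ($\mathcal T[1,0]$ being empty). *)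

theory Defs
  imports Main "HOL-Library.Sublist" "HOL-Library.List_Lexorder"
begin

text \<open>Texts are lists of naturals; positions are 1-based. T[i] = T ! (i-1).\<close>

definition is_text :: "nat list \<Rightarrow> bool" where
  "is_text T \<longleftrightarrow> T \<noteq> [] \<and> (\<forall>i < length T - 1. last T < T ! i)"

definition suf :: "nat list \<Rightarrow> nat \<Rightarrow> nat list" where
  "suf T i = drop (i - 1) T"

definition right_maximal :: "nat list \<Rightarrow> nat list \<Rightarrow> bool" where
  "right_maximal T \<alpha> \<longleftrightarrow> suffix \<alpha> T \<or>
     (\<exists>a b. a \<noteq> b \<and> sublist (\<alpha> @ [a]) T \<and> sublist (\<alpha> @ [b]) T)"

definition ISA :: "nat list \<Rightarrow> nat \<Rightarrow> nat" where
  "ISA T i = card {j \<in> {1..length T}. suf T j < suf T i} + 1"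

definition rlce :: "nat list \<Rightarrow> nat \<Rightarrow> nat \<Rightarrow> nat" where
  "rlce T i j = length (longest_common_prefix (suf T i) (suf T j))"

definition LPF :: "nat list \<Rightarrow> (nat \<Rightarrow> nat) \<Rightarrow> nat \<Rightarrow> nat" where
  "LPF T \<pi> i = (if \<pi> i = 1 then 0
     else Max {rlce T j i | j. j \<in> {1..length T} \<and> \<pi> j < \<pi> i})"

definition PDA :: "nat list \<Rightarrow> (nat \<Rightarrow> nat) \<Rightarrow> nat set" where
  "PDA T \<pi> = {i + LPF T \<pi> i | i. i \<in> {1..length T}}"

definition stlex_minus :: "nat list \<Rightarrow> nat set" where
  "stlex_minus T = PDA T (ISA T)"

definition stlex_plus :: "nat list \<Rightarrow> nat set" where
  "stlex_plus T = PDA T (\<lambda>i. length T - ISA T i + 1)"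

definition stlex_set :: "nat list \<Rightarrow> nat set" where
  "stlex_set T = (\<lambda>i. i - 1) ` (stlex_minus T \<union> stlex_plus T \<union> {length T + 1})"

text \<open>The range st-lex[b,e] of positions i in st-lex such that T[1,i] is suffixed by alpha
  (contiguous in the colexicographically sorted array; we represent it by its set of entries).\<close>
definition stlex_range :: "nat list \<Rightarrow> nat list \<Rightarrow> nat set" where
  "stlex_range T \<alpha> = {i \<in> stlex_set T. suffix \<alpha> (take i T)}"

definition right_ext :: "nat list \<Rightarrow> nat list \<Rightarrow> nat set" where
  "right_ext T \<alpha> = {c. sublist (\<alpha> @ [c]) T}"

end

theory Submission
  imports Defs
begin

lemma lcp_len: "a \<noteq> b \<Longrightarrow> length (longest_common_prefix (p@a#xs) (p@b#ys)) = length p"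
  by (induction p) auto

lemma lcp_take: "k \<le> length (longest_common_prefix xs ys) \<Longrightarrow> take k xs = take k ys"
proof -
  assume k: "k \<le> length (longest_common_prefix xs ys)"
  obtain r1 where r1: "xs = longest_common_prefix xs ys @ r1"
    using longest_common_prefix_prefix1 prefix_def by blast
  obtain r2 where r2: "ys = longest_common_prefix xs ys @ r2"
    using longest_common_prefix_prefix2 prefix_def by blast
  show ?thesis using k by (subst r1, subst r2) simp
qed

lemma less_split: "a \<noteq> b \<Longrightarrow> ((p@a#xs) < (p@b#ys)) = (a < (b::nat))"
  by (induction p) auto

lemma ISA_less:
  assumes "i \<in> {1..length T}" "j \<in> {1..length T}"
  shows "ISA T j < ISA T i \<longleftrightarrow> suf T j < suf T i"
proof
  assume "suf T j < suf T i"
  then have "{k \<in> {1..length T}. suf T k < suf T j} \<subset> {k \<in> {1..length T}. suf T k < suf T i}"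
    using assms by (auto intro: less_trans)
  then show "ISA T j < ISA T i" unfolding ISA_def by (simp add: psubset_card_mono)
next
  assume a: "ISA T j < ISA T i"
  show "suf T j < suf T i"
  proof (rule ccontr)
    assume "\<not> suf T j < suf T i"
    then have "suf T i \<le> suf T j" by auto
    then have "{k \<in> {1..length T}. suf T k < suf T i} \<subseteq> {k \<in> {1..length T}. suf T k < suf T j}"
      by (auto intro: less_le_trans)
    then have "ISA T i \<le> ISA T j" unfolding ISA_def by (simp add: card_mono)
    with a show False by simp
  qed
qed

lemma ISA_le: "i \<in> {1..length T} \<Longrightarrow> ISA T i \<le> length T"
proof -
  assume i: "i \<in> {1..length T}"
  have "{k \<in> {1..length T}. suf T k < suf T i} \<subseteq> {1..length T} - {i}" by auto
  then have "card {k \<in> {1..length T}. suf T k < suf T i} \<le> card ({1..length T} - {i})"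
    by (intro card_mono) auto
  also have "\<dots> = length T - 1" using i by simp
  finally have "card {k \<in> {1..length T}. suf T k < suf T i} \<le> length T - 1" .
  moreover have "1 \<le> length T" using i by simp
  ultimately show ?thesis unfolding ISA_def by linarith
qed

lemma LPF_eq:
  assumes fin: "\<forall>j. \<pi> j \<ge> 1"
    and ub: "\<forall>j\<in>{1..length T}. \<pi> j < \<pi> i \<longrightarrow> rlce T j i \<le> m"
    and q: "q \<in> {1..length T}" "\<pi> q < \<pi> i" "rlce T q i = m"
  shows "LPF T \<pi> i = m"
proof -
  let ?S = "{rlce T j i | j. j \<in> {1..length T} \<and> \<pi> j < \<pi> i}"
  have "\<pi> i \<noteq> 1" using fin q by (metis leD)
  moreover have "finite ?S" by simp
  moreover have "m \<in> ?S" using q by blast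
  moreover have "\<forall>x\<in>?S. x \<le> m" using ub by blast
  ultimately have "Max ?S = m" by (intro Max_eqI) auto
  with \<open>\<pi> i \<noteq> 1\<close> show ?thesis unfolding LPF_def by simp
qed

lemma suf_occ:
  assumes "sublist (\<alpha> @ [c]) T"
  obtains q s where "q \<in> {1..length T}" "suf T q = \<alpha> @ c # s"
proof -
  obtain p s where T: "T = p @ (\<alpha> @ [c]) @ s" using assms by (auto simp: sublist_def)
  show ?thesis
    by (rule that[of "length p + 1" s]) (auto simp: T suf_def)
qed

lemma occ_setup:
  assumes "length \<alpha> \<le> j" "j + 1 \<le> length T"
    and "take (length \<alpha> + 1) (drop (j - length \<alpha>) T) = \<alpha> @ [c]"
  shows "j + 1 - length \<alpha> \<in> {1..length T}"
    and "\<exists>r. suf T (j + 1 - length \<alpha>) = \<alpha> @ c # r"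
    and "suffix \<alpha> (take j T)"
proof -
  show "j + 1 - length \<alpha> \<in> {1..length T}" using assms by auto
  have d: "suf T (j + 1 - length \<alpha>) = drop (j - length \<alpha>) T"
    using assms by (simp add: suf_def)
  show "\<exists>r. suf T (j + 1 - length \<alpha>) = \<alpha> @ c # r"
    using assms(3) unfolding d
    by (metis append_Cons append_assoc append_take_drop_id self_append_conv2)
  have "take j T = take (j - length \<alpha>) T @ take (length \<alpha>) (drop (j - length \<alpha>) T)"
    using assms(1) by (metis le_add_diff_inverse2 take_add)
  also have "take (length \<alpha>) (drop (j - length \<alpha>) T) = \<alpha>"
    using assms(3) by (metis append_eq_conv_conj le_add1 min.absorb1 take_take)
  finally show "suffix \<alpha> (take j T)" by (simp add: suffix_def)
qed

lemma fin_ext: "finite (right_ext T \<alpha>)"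
proof -
  have "right_ext T \<alpha> \<subseteq> set T" unfolding right_ext_def
    by (auto simp: sublist_def)
  then show ?thesis by (rule finite_subset) simp
qed

lemma pref_take: "take (length p) xs = p \<Longrightarrow> prefix p xs"
  by (metis take_is_prefix)

theorem corollary26:
  fixes T \<alpha> :: "nat list"
  assumes "is_text T"
    and "right_maximal T \<alpha>"
  shows
   "(\<forall>c j. c \<in> right_ext T \<alpha> - {Min (right_ext T \<alpha>)} \<longrightarrow>
       length \<alpha> \<le> j \<longrightarrow> j + 1 \<le> length T \<longrightarrow>
       take (length \<alpha> + 1) (drop (j - length \<alpha>) T) = \<alpha> @ [c] \<longrightarrow>
       (\<forall>q \<in> {1..length T}. prefix (\<alpha> @ [c]) (suf T q) \<longrightarrow>
           suf T (j + 1 - length \<alpha>) \<le> suf T q) \<longrightarrow>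
       j \<in> stlex_range T \<alpha>)
  \<and> (\<forall>c j. c \<in> right_ext T \<alpha> - {Max (right_ext T \<alpha>)} \<longrightarrow>
       length \<alpha> \<le> j \<longrightarrow> j + 1 \<le> length T \<longrightarrow>
       take (length \<alpha> + 1) (drop (j - length \<alpha>) T) = \<alpha> @ [c] \<longrightarrow>
       (\<forall>q \<in> {1..length T}. prefix (\<alpha> @ [c]) (suf T q) \<longrightarrow>
           suf T q \<le> suf T (j + 1 - length \<alpha>)) \<longrightarrow>
       j \<in> stlex_range T \<alpha>)"
proof (intro conjI allI impI)
  let ?C = "right_ext T \<alpha>"
  fix c j
  assume cC: "c \<in> ?C - {Min ?C}" and j1: "length \<alpha> \<le> j" and j2: "j + 1 \<le> length T"
    and tk: "take (length \<alpha> + 1) (drop (j - length \<alpha>) T) = \<alpha> @ [c]"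
    and mn: "\<forall>q \<in> {1..length T}. prefix (\<alpha> @ [c]) (suf T q) \<longrightarrow>
           suf T (j + 1 - length \<alpha>) \<le> suf T q"
  define i where "i = j + 1 - length \<alpha>"
  note S = occ_setup[OF j1 j2 tk, folded i_def]
  obtain r where r: "suf T i = \<alpha> @ c # r" using S(2) by blast
  define c' where "c' = Min ?C"
  have c'C: "c' \<in> ?C" and c'c: "c' < c" using cC fin_ext[of T \<alpha>] unfolding c'_def
    by (auto intro: Min_in simp: order_le_neq_trans)
  then obtain q s where q: "q \<in> {1..length T}" "suf T q = \<alpha> @ c' # s"
    using suf_occ unfolding right_ext_def by blast
  have "ISA T q < ISA T i" using ISA_less[OF S(1) q(1)] q(2) r c'c less_split[of c' c \<alpha>] by simp
  moreover have "rlce T q i = length \<alpha>" unfolding rlce_def using q(2) r c'c lcp_len[of _ _ \<alpha>] by (simp add: less_imp_neq)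
  moreover have "\<forall>j'\<in>{1..length T}. ISA T j' < ISA T i \<longrightarrow> rlce T j' i \<le> length \<alpha>"
  proof (intro ballI impI)
    fix j' assume j': "j' \<in> {1..length T}" "ISA T j' < ISA T i"
    then have lt: "suf T j' < suf T i" using ISA_less[OF S(1)] by blast
    show "rlce T j' i \<le> length \<alpha>"
    proof (rule ccontr)
      assume "\<not> rlce T j' i \<le> length \<alpha>"
      then have "take (length \<alpha> + 1) (suf T j') = take (length \<alpha> + 1) (suf T i)"
        unfolding rlce_def by (intro lcp_take) simp
      also have "\<dots> = \<alpha> @ [c]" using r by simp
      finally have "prefix (\<alpha> @ [c]) (suf T j')" by (intro pref_take) simp
      then have "suf T i \<le> suf T j'" using mn j'(1) i_def by blast
      with lt show False by simp
    qed
  qed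
  moreover have "\<forall>x. ISA T x \<ge> 1" unfolding ISA_def by simp
  ultimately have "LPF T (ISA T) i = length \<alpha>" using q(1) by (intro LPF_eq) auto
  then have "j + 1 \<in> stlex_minus T" unfolding stlex_minus_def PDA_def
    using S(1) i_def j1 by (auto intro!: exI[of _ i])
  then show "j \<in> stlex_range T \<alpha>" unfolding stlex_range_def stlex_set_def
    using S(3) by (auto intro!: image_eqI[of _ _ "j+1"])
next
  let ?C = "right_ext T \<alpha>"
  fix c j
  assume cC: "c \<in> ?C - {Max ?C}" and j1: "length \<alpha> \<le> j" and j2: "j + 1 \<le> length T"
    and tk: "take (length \<alpha> + 1) (drop (j - length \<alpha>) T) = \<alpha> @ [c]"
    and mn: "\<forall>q \<in> {1..length T}. prefix (\<alpha> @ [c]) (suf T q) \<longrightarrow>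
           suf T q \<le> suf T (j + 1 - length \<alpha>)"
  define i where "i = j + 1 - length \<alpha>"
  define \<pi> where "\<pi> = (\<lambda>i. length T - ISA T i + 1)"
  note S = occ_setup[OF j1 j2 tk, folded i_def]
  have PI: "\<pi> x < \<pi> i \<longleftrightarrow> suf T i < suf T x" if "x \<in> {1..length T}" for x
  proof -
    have "\<pi> x < \<pi> i \<longleftrightarrow> ISA T i < ISA T x"
      using ISA_le[OF that] ISA_le[OF S(1)] unfolding \<pi>_def by linarith
    then show ?thesis using ISA_less[OF that S(1)] by simp
  qed
  obtain r where r: "suf T i = \<alpha> @ c # r" using S(2) by blast
  define c' where "c' = Max ?C"
  have c'C: "c' \<in> ?C" and c'c: "c < c'" using cC fin_ext[of T \<alpha>] unfolding c'_def
    by (auto intro: Max_in simp: order_le_neq_trans)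
  then obtain q s where q: "q \<in> {1..length T}" "suf T q = \<alpha> @ c' # s"
    using suf_occ unfolding right_ext_def by blast
  have "\<pi> q < \<pi> i" using PI[OF q(1)] q(2) r c'c less_split[of c c' \<alpha>] by simp
  moreover have "rlce T q i = length \<alpha>" unfolding rlce_def using q(2) r c'c lcp_len[of _ _ \<alpha>] by (simp add: less_imp_neq)
  moreover have "\<forall>j'\<in>{1..length T}. \<pi> j' < \<pi> i \<longrightarrow> rlce T j' i \<le> length \<alpha>"
  proof (intro ballI impI)
    fix j' assume j': "j' \<in> {1..length T}" "\<pi> j' < \<pi> i"
    then have lt: "suf T i < suf T j'" using PI by blast
    show "rlce T j' i \<le> length \<alpha>"
    proof (rule ccontr)
      assume "\<not> rlce T j' i \<le> length \<alpha>"
      then have "take (length \<alpha> + 1) (suf T j') = take (length \<alpha> + 1) (suf T i)"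
        unfolding rlce_def by (intro lcp_take) simp
      also have "\<dots> = \<alpha> @ [c]" using r by simp
      finally have "prefix (\<alpha> @ [c]) (suf T j')" by (intro pref_take) simp
      then have "suf T j' \<le> suf T i" using mn j'(1) i_def by blast
      with lt show False by simp
    qed
  qed
  moreover have "\<forall>x. \<pi> x \<ge> 1" unfolding \<pi>_def by simp
  ultimately have "LPF T \<pi> i = length \<alpha>" using q(1) by (intro LPF_eq) auto
  then have "j + 1 \<in> stlex_plus T" unfolding stlex_plus_def PDA_def \<pi>_def[symmetric]
    using S(1) i_def j1 by (auto intro!: exI[of _ i])
  then show "j \<in> stlex_range T \<alpha>" unfolding stlex_range_def stlex_set_def
    using S(3) by (auto intro!: image_eqI[of _ _ "j+1"])
qed

end
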